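(* For every integer $n\geq 4$, $$\dot{\imath}_{[1,2]}(P_4\Box P_n)=\begin{cases} n+1 & \text{if } n\in\{5,6,9\},\\ n & \text{otherwise.}\end{cases}$$
   Context: $P_k$ denotes the path on $k$ vertices and $P_m\Box P_n$ the Cartesian product of two paths (the $m\times n$ grid graph). A set $S$ of vertices of a graph $G$ is independent if no two vertices of $S$ are adjacent, and dominating if every vertex not in $S$ has at least one neighbor in $S$. An independent $[1,2]$-set of $G$ is an independent dominating set $S$ such that every vertex $v\in V(G)\setminus S$ has at least one and at most two neighbors in $S$. When $G$ has an independent $[1,2]$-set, $\dot{\imath}_{[1,2]}(G)$ denotes the minimum cardinality of an independent $[1,2]$-set of $G$ (the statement includes the existence of such a set). *)

theory Defs
  imports Main
begin

definition indep_12_set :: "'a set \<Rightarrow> ('a \<Rightarrow> 'a \<Rightarrow> bool) \<Rightarrow> 'a set \<Rightarrow> bool" where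
  "indep_12_set V E S \<longleftrightarrow>
     S \<subseteq> V \<and>
     (\<forall>u\<in>S. \<forall>v\<in>S. \<not> E u v) \<and>
     (\<forall>v\<in>V - S. 1 \<le> card {u\<in>S. E v u} \<and> card {u\<in>S. E v u} \<le> 2)"

definition i12 :: "'a set \<Rightarrow> ('a \<Rightarrow> 'a \<Rightarrow> bool) \<Rightarrow> nat" where
  "i12 V E = Min (card ` {S. indep_12_set V E S})"

definition grid_V :: "nat \<Rightarrow> nat \<Rightarrow> (nat \<times> nat) set" where
  "grid_V m n = {0..<m} \<times> {0..<n}"

definition grid_E :: "nat \<times> nat \<Rightarrow> nat \<times> nat \<Rightarrow> bool" where
  "grid_E u v \<longleftrightarrow>
     (fst u = fst v \<and> (snd u = snd v + 1 \<or> snd v = snd u + 1)) \<or>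
     (snd u = snd v \<and> (fst u = fst v + 1 \<or> fst v = fst u + 1))"

end

theory Submission
  imports Defs
begin

type_synonym col = "bool \<times> bool \<times> bool \<times> bool"

abbreviation K0 :: col where "K0 \<equiv> (False,False,False,False)"
abbreviation K1 :: col where "K1 \<equiv> (True,False,False,False)"
abbreviation K2 :: col where "K2 \<equiv> (False,True,False,False)"
abbreviation K4 :: col where "K4 \<equiv> (False,False,True,False)"
abbreviation K8 :: col where "K8 \<equiv> (False,False,False,True)"
abbreviation K5 :: col where "K5 \<equiv> (True,False,True,False)"
abbreviation K9 :: col where "K9 \<equiv> (True,False,False,True)"
abbreviation K10 :: col where "K10 \<equiv> (False,True,False,True)"

fun indepc :: "col \<Rightarrow> bool" where
  "indepc (b0,b1,b2,b3) = (\<not>(b0\<and>b1) \<and> \<not>(b1\<and>b2) \<and> \<not>(b2\<and>b3))"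

fun cost :: "col \<Rightarrow> nat" where
  "cost (b0,b1,b2,b3) = of_bool b0 + of_bool b1 + of_bool b2 + of_bool b3"

definition cnt12 :: "nat \<Rightarrow> bool" where "cnt12 k \<longleftrightarrow> 1 \<le> k \<and> k \<le> 2"

fun okc :: "col \<Rightarrow> col \<Rightarrow> col \<Rightarrow> bool" where
  "okc (a0,a1,a2,a3) (b0,b1,b2,b3) (c0,c1,c2,c3) =
    (indepc (b0,b1,b2,b3) \<and> indepc (c0,c1,c2,c3) \<and>
     \<not>(a0\<and>b0) \<and> \<not>(a1\<and>b1) \<and> \<not>(a2\<and>b2) \<and> \<not>(a3\<and>b3) \<and>
     \<not>(b0\<and>c0) \<and> \<not>(b1\<and>c1) \<and> \<not>(b2\<and>c2) \<and> \<not>(b3\<and>c3) \<and>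
     (\<not>b0 \<longrightarrow> cnt12 (of_bool b1 + of_bool a0 + of_bool c0)) \<and>
     (\<not>b1 \<longrightarrow> cnt12 (of_bool b0 + of_bool b2 + of_bool a1 + of_bool c1)) \<and>
     (\<not>b2 \<longrightarrow> cnt12 (of_bool b1 + of_bool b3 + of_bool a2 + of_bool c2)) \<and>
     (\<not>b3 \<longrightarrow> cnt12 (of_bool b2 + of_bool a3 + of_bool c3)))"

fun steps :: "col \<times> col \<Rightarrow> col list \<Rightarrow> (col \<times> col) option" where
  "steps s [] = Some s"
| "steps (a,b) (c#cs) = (if okc a b c then steps (b,c) cs else None)"

fun acc :: "col list \<Rightarrow> bool" where
  "acc [] = False"
| "acc (c#cs) = (indepc c \<and> (case steps (K0,c) cs of None \<Rightarrow> False | Some (a,b) \<Rightarrow> okc a b K0))"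

definition indcols :: "col list" where "indcols = [K0,K1,K2,K4,K8,K5,K9,K10]"

lemma indcols_complete: "indepc c \<Longrightarrow> c \<in> set indcols"
  by (cases c) (auto simp: indcols_def)

lemma okc_indep: "okc a b c \<Longrightarrow> indepc b \<and> indepc c"
  by (cases a; cases b; cases c) auto

definition goodL :: "((col\<times>col)\<times>int) list \<Rightarrow> ((col\<times>col)\<times>int) list \<Rightarrow> bool" where
  "goodL L1 L2 = list_all (\<lambda>((a,b),v). list_all (\<lambda>c. okc a b c \<longrightarrow>
      list_ex (\<lambda>(s',v'). s' = (b,c) \<and> v' \<le> v + int (cost c) - 1) L2) indcols) L1"

definition initOK :: "((col\<times>col)\<times>int) list \<Rightarrow> bool" where
  "initOK L = list_all (\<lambda>c. list_ex (\<lambda>(s,v). s = (K0,c) \<and> v \<le> int (cost c) - 1) L) indcols"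

definition finOK :: "((col\<times>col)\<times>int) list \<Rightarrow> int \<Rightarrow> bool" where
  "finOK L t = list_all (\<lambda>((a,b),v). okc a b K0 \<longrightarrow> t \<le> v) L"

definition H :: "((col\<times>col)\<times>int) list" where "H = [((K0,K0),-1), ((K0,K1),0), ((K0,K2),0), ((K0,K4),0), ((K0,K5),1), ((K0,K8),0), ((K0,K9),1), ((K0,K10),1), ((K1,K4),0), ((K1,K8),0), ((K1,K10),1), ((K2,K0),-1), ((K2,K1),0), ((K2,K4),0), ((K2,K5),1), ((K2,K8),0), ((K2,K9),1), ((K4,K0),-1), ((K4,K1),0), ((K4,K2),0), ((K4,K8),0), ((K4,K9),1), ((K4,K10),1), ((K5,K0),0), ((K5,K8),1), ((K8,K1),0), ((K8,K2),0), ((K8,K5),1), ((K9,K0),0), ((K9,K2),1), ((K9,K4),1), ((K10,K0),0), ((K10,K1),1)]"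

definition T1 :: "((col\<times>col)\<times>int) list" where "T1 = [((K0,K0),-1), ((K0,K1),0), ((K0,K2),0), ((K0,K4),0), ((K0,K5),1), ((K0,K8),0), ((K0,K9),1), ((K0,K10),1)]"

definition T2 :: "((col\<times>col)\<times>int) list" where "T2 = [((K2,K8),0), ((K2,K9),1), ((K4,K1),0), ((K4,K9),1), ((K5,K0),0), ((K5,K8),1), ((K9,K0),0), ((K9,K2),1), ((K9,K4),1), ((K10,K0),0), ((K10,K1),1)]"

definition T3 :: "((col\<times>col)\<times>int) list" where "T3 = [((K0,K5),1), ((K0,K10),1), ((K1,K4),1), ((K1,K8),0), ((K1,K10),1), ((K2,K0),0), ((K2,K4),1), ((K2,K8),1), ((K4,K0),0), ((K4,K1),1), ((K4,K2),1), ((K8,K1),0), ((K8,K2),1), ((K8,K5),1), ((K9,K0),0), ((K9,K2),1), ((K9,K4),1)]"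

definition T4 :: "((col\<times>col)\<times>int) list" where "T4 = [((K1,K4),0), ((K1,K8),1), ((K1,K10),2), ((K2,K0),0), ((K2,K1),1), ((K2,K4),1), ((K2,K5),2), ((K2,K8),1), ((K2,K9),2), ((K4,K0),0), ((K4,K1),1), ((K4,K2),1), ((K4,K8),1), ((K4,K9),2), ((K4,K10),2), ((K5,K0),0), ((K5,K8),1), ((K8,K1),1), ((K8,K2),0), ((K8,K5),2), ((K10,K0),0), ((K10,K1),1)]"

definition T5 :: "((col\<times>col)\<times>int) list" where "T5 = [((K0,K5),1), ((K0,K10),1), ((K1,K4),1), ((K1,K8),1), ((K1,K10),2), ((K2,K0),-1), ((K2,K1),0), ((K2,K4),0), ((K2,K5),1), ((K2,K8),0), ((K2,K9),1), ((K4,K0),-1), ((K4,K1),0), ((K4,K2),0), ((K4,K8),0), ((K4,K9),1), ((K4,K10),1), ((K5,K0),1), ((K8,K1),1), ((K8,K2),1), ((K8,K5),2), ((K9,K0),1), ((K9,K2),2), ((K9,K4),2), ((K10,K0),1)]"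

definition T6 :: "((col\<times>col)\<times>int) list" where "T6 = [((K0,K5),2), ((K0,K10),2), ((K1,K4),1), ((K1,K8),0), ((K1,K10),1), ((K2,K0),0), ((K2,K1),1), ((K2,K4),1), ((K2,K5),2), ((K2,K8),0), ((K2,K9),1), ((K4,K0),0), ((K4,K1),0), ((K4,K2),1), ((K4,K8),1), ((K4,K9),1), ((K4,K10),2), ((K5,K0),0), ((K5,K8),1), ((K8,K1),0), ((K8,K2),1), ((K8,K5),1), ((K9,K0),0), ((K9,K2),1), ((K9,K4),1), ((K10,K0),0), ((K10,K1),1)]"

definition T7 :: "((col\<times>col)\<times>int) list" where "T7 = [((K0,K5),1), ((K0,K10),1), ((K1,K4),0), ((K1,K8),0), ((K1,K10),1), ((K2,K0),0), ((K2,K1),1), ((K2,K4),1), ((K2,K5),2), ((K2,K8),1), ((K2,K9),2), ((K4,K0),0), ((K4,K1),1), ((K4,K2),1), ((K4,K8),1), ((K4,K9),2), ((K4,K10),2), ((K5,K0),0), ((K5,K8),2), ((K8,K1),0), ((K8,K2),0), ((K8,K5),1), ((K9,K0),0), ((K9,K2),1), ((K9,K4),1), ((K10,K0),0), ((K10,K1),2)]"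

definition T8 :: "((col\<times>col)\<times>int) list" where "T8 = [((K0,K5),1), ((K0,K10),1), ((K1,K4),0), ((K1,K8),1), ((K1,K10),2), ((K2,K0),-1), ((K2,K1),0), ((K2,K4),0), ((K2,K5),1), ((K2,K8),0), ((K2,K9),1), ((K4,K0),-1), ((K4,K1),0), ((K4,K2),0), ((K4,K8),0), ((K4,K9),1), ((K4,K10),1), ((K5,K0),0), ((K5,K8),1), ((K8,K1),1), ((K8,K2),0), ((K8,K5),2), ((K9,K0),1), ((K9,K2),2), ((K9,K4),2), ((K10,K0),0), ((K10,K1),1)]"

definition T9 :: "((col\<times>col)\<times>int) list" where "T9 = [((K0,K5),1), ((K0,K10),1), ((K1,K4),1), ((K1,K8),0), ((K1,K10),1), ((K2,K0),-1), ((K2,K1),0), ((K2,K4),0), ((K2,K5),1), ((K2,K8),0), ((K2,K9),1), ((K4,K0),-1), ((K4,K1),0), ((K4,K2),0), ((K4,K8),0), ((K4,K9),1), ((K4,K10),1), ((K5,K0),0), ((K5,K8),1), ((K8,K1),0), ((K8,K2),1), ((K8,K5),1), ((K9,K0),0), ((K9,K2),1), ((K9,K4),1), ((K10,K0),0), ((K10,K1),1)]"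

lemma steps_append: "steps s (xs@ys) = (case steps s xs of None \<Rightarrow> None | Some t \<Rightarrow> steps t ys)"
  by (induction s xs rule: steps.induct) auto

lemma steps_rep: "steps s blk = Some s \<Longrightarrow> steps s (concat (replicate q blk)) = Some s"
  by (induction q) (auto simp: steps_append)

lemma steps_rep2: "steps s1 blk = Some s2 \<Longrightarrow> steps s2 blk = Some s2 \<Longrightarrow>
   steps s1 (concat (replicate q blk)) = Some (if q = 0 then s1 else s2)"
  by (cases q) (auto simp: steps_append steps_rep)

lemma chainH:
  assumes "goodL L L"
  shows "(s,v) \<in> set L \<Longrightarrow> steps s cs = Some t \<Longrightarrow>
    \<exists>v'. (t,v') \<in> set L \<and> v' \<le> v + int (sum_list (map cost cs)) - int (length cs)"
proof (induction cs arbitrary: s v)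
  case Nil
  then show ?case by auto
next
  case (Cons c cs)
  obtain a b where s: "s = (a,b)" by (cases s)
  from Cons.prems s have ok: "okc a b c" and st: "steps (b,c) cs = Some t"
    by (auto split: if_splits)
  from okc_indep[OF ok] have "c \<in> set indcols" using indcols_complete by blast
  with assms Cons.prems(1) ok s obtain v1 where v1: "((b,c),v1) \<in> set L" "v1 \<le> v + int (cost c) - 1"
    unfolding goodL_def list_all_iff list_ex_iff by fastforce
  from Cons.IH[OF v1(1) st] v1(2) show ?case by auto
qed

fun gchain :: "((col\<times>col)\<times>int) list list \<Rightarrow> bool" where
  "gchain (L1#L2#Ls) = (goodL L1 L2 \<and> gchain (L2#Ls))"
| "gchain _ = True"

lemma chainG:
  "gchain (L#Ls) \<Longrightarrow> (s,v) \<in> set L \<Longrightarrow> length cs = length Ls \<Longrightarrow> steps s cs = Some t \<Longrightarrow>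
    \<exists>v'. (t,v') \<in> set (last (L#Ls)) \<and> v' \<le> v + int (sum_list (map cost cs)) - int (length cs)"
proof (induction cs arbitrary: s v L Ls)
  case Nil
  then show ?case by auto
next
  case (Cons c cs)
  obtain a b where s: "s = (a,b)" by (cases s)
  from Cons.prems(3) obtain L2 Ls' where Ls: "Ls = L2 # Ls'" by (cases Ls) auto
  from Cons.prems s have ok: "okc a b c" and st: "steps (b,c) cs = Some t"
    by (auto split: if_splits)
  from okc_indep[OF ok] have "c \<in> set indcols" using indcols_complete by blast
  have g: "goodL L L2" using Cons.prems(1) Ls by simp
  with \<open>c \<in> set indcols\<close> Cons.prems(2) ok s obtain v1 where v1: "((b,c),v1) \<in> set L2" "v1 \<le> v + int (cost c) - 1"
    unfolding goodL_def list_all_iff list_ex_iff by fastforce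
  from Cons.prems(1,3) Ls have "gchain (L2#Ls')" "length cs = length Ls'" by auto
  from Cons.IH[OF this(1) v1(1) this(2) st] v1(2) Ls show ?case by auto
qed

lemma lowerH:
  assumes "acc w" "goodL L L" "initOK L" "finOK L t"
  shows "int (sum_list (map cost w)) \<ge> int (length w) + t"
proof -
  obtain c cs where w: "w = c # cs" using assms(1) by (cases w) auto
  from assms(1) w obtain a b where ic: "indepc c" and st: "steps (K0,c) cs = Some (a,b)" and fo: "okc a b K0"
    by (auto split: option.splits)
  from assms(3) indcols_complete[OF ic] obtain v where v: "((K0,c),v) \<in> set L" "v \<le> int (cost c) - 1"
    unfolding initOK_def list_all_iff list_ex_iff by fastforce
  from chainH[OF assms(2) v(1) st] obtain v' where v': "((a,b),v') \<in> set L"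
     "v' \<le> v + int (sum_list (map cost cs)) - int (length cs)" by blast
  from assms(4) v'(1) fo have "t \<le> v'" unfolding finOK_def list_all_iff by fastforce
  with v v' w show ?thesis by simp
qed

lemma lowerG:
  assumes "acc w" "gchain (L#Ls)" "initOK L" "finOK (last (L#Ls)) t" "length w = Suc (length Ls)"
  shows "int (sum_list (map cost w)) \<ge> int (length w) + t"
proof -
  obtain c cs where w: "w = c # cs" using assms(1) by (cases w) auto
  from assms(1) w obtain a b where ic: "indepc c" and st: "steps (K0,c) cs = Some (a,b)" and fo: "okc a b K0"
    by (auto split: option.splits)
  from assms(3) indcols_complete[OF ic] obtain v where v: "((K0,c),v) \<in> set L" "v \<le> int (cost c) - 1"
    unfolding initOK_def list_all_iff list_ex_iff by fastforce
  from assms(5) w have "length cs = length Ls" by simp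
  from chainG[OF assms(2) v(1) this st] obtain v' where v': "((a,b),v') \<in> set (last (L#Ls))"
     "v' \<le> v + int (sum_list (map cost cs)) - int (length cs)" by blast
  from assms(4) v'(1) fo have "t \<le> v'" unfolding finOK_def list_all_iff by fastforce
  with v v' w show ?thesis by simp
qed

lemma low_all: "acc w \<Longrightarrow> sum_list (map cost w) \<ge> length w"
proof -
  assume a: "acc w"
  have "goodL H H" by (simp add: goodL_def H_def indcols_def cnt12_def)
  moreover have "initOK H" by (simp add: initOK_def H_def indcols_def)
  moreover have "finOK H 0" by (simp add: finOK_def H_def cnt12_def)
  ultimately show ?thesis using lowerH[OF a] by fastforce
qed

lemma low5: "acc w \<Longrightarrow> length w = 5 \<Longrightarrow> sum_list (map cost w) \<ge> 6"
proof -
  assume a: "acc w" "length w = 5"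
  have "gchain [T1,T2,T3,T4,T5]"
    by (simp add: goodL_def T1_def T2_def T3_def T4_def T5_def indcols_def cnt12_def)
  moreover have "initOK T1" by (simp add: initOK_def T1_def indcols_def)
  moreover have "finOK (last [T1,T2,T3,T4,T5]) 1" by (simp add: finOK_def T5_def cnt12_def)
  ultimately show ?thesis using lowerG[OF a(1), of T1 "[T2,T3,T4,T5]" 1] a(2) by fastforce
qed

lemma low6: "acc w \<Longrightarrow> length w = 6 \<Longrightarrow> sum_list (map cost w) \<ge> 7"
proof -
  assume a: "acc w" "length w = 6"
  have "gchain [T1,T2,T3,T4,T5,T6]"
    by (simp add: goodL_def T1_def T2_def T3_def T4_def T5_def T6_def indcols_def cnt12_def)
  moreover have "initOK T1" by (simp add: initOK_def T1_def indcols_def)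
  moreover have "finOK (last [T1,T2,T3,T4,T5,T6]) 1" by (simp add: finOK_def T6_def cnt12_def)
  ultimately show ?thesis using lowerG[OF a(1), of T1 "[T2,T3,T4,T5,T6]" 1] a(2) by fastforce
qed

lemma low9: "acc w \<Longrightarrow> length w = 9 \<Longrightarrow> sum_list (map cost w) \<ge> 10"
proof -
  assume a: "acc w" "length w = 9"
  have "gchain [T1,T2,T3,T4,T5,T6,T7,T8,T9]"
    by (simp add: goodL_def T1_def T2_def T3_def T4_def T5_def T6_def T7_def T8_def T9_def indcols_def cnt12_def)
  moreover have "initOK T1" by (simp add: initOK_def T1_def indcols_def)
  moreover have "finOK (last [T1,T2,T3,T4,T5,T6,T7,T8,T9]) 1" by (simp add: finOK_def T9_def cnt12_def)
  ultimately show ?thesis using lowerG[OF a(1), of T1 "[T2,T3,T4,T5,T6,T7,T8,T9]" 1] a(2) by fastforce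
qed

definition pvf :: "(nat \<Rightarrow> col) \<Rightarrow> nat \<Rightarrow> col" where
  "pvf f j = (if j = 0 then K0 else f (j - 1))"

lemma steps_map:
  assumes "n \<ge> 1"
  shows "steps (K0, f 0) (map f [1..<n]) =
    (if (\<forall>j. Suc j < n \<longrightarrow> okc (pvf f j) (f j) (f (Suc j))) then Some (pvf f (n-1), f (n-1)) else None)"
  using assms
proof (induction n rule: nat_induct_at_least)
  case base
  then show ?case by (simp add: pvf_def)
next
  case (Suc n)
  have u: "[1..<Suc n] = [1..<n] @ [n]" using Suc.hyps by simp
  have e: "(\<forall>j. Suc j < Suc n \<longrightarrow> P j) \<longleftrightarrow> (\<forall>j. Suc j < n \<longrightarrow> P j) \<and> P (n-1)" for P
    using Suc.hyps by (auto simp: less_Suc_eq)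
  have p: "pvf f n = f (n-1)" using Suc.hyps by (simp add: pvf_def)
  show ?case unfolding u map_append steps_append Suc.IH e using Suc.hyps p
    by (auto simp: Suc_pred')
qed

lemma acc_map:
  assumes "n \<ge> 1" "f n = K0"
  shows "acc (map f [0..<n]) \<longleftrightarrow> (\<forall>j<n. okc (pvf f j) (f j) (f (Suc j)))"
proof -
  have m: "map f [0..<n] = f 0 # map f [1..<n]" using assms(1)
    by (simp add: upt_conv_Cons)
  have e: "(\<forall>j<n. P j) \<longleftrightarrow> (\<forall>j. Suc j < n \<longrightarrow> P j) \<and> P (n-1)" for P
    using assms(1) by (metis Suc_pred' diff_less le_less_trans less_Suc_eq zero_less_one not_less_eq)
  have f: "f (Suc (n-1)) = K0" using assms by simp
  have i0: "okc (pvf f 0) (f 0) (f (Suc 0)) \<Longrightarrow> indepc (f 0)" using okc_indep by blast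
  show ?thesis unfolding m acc.simps steps_map[OF assms(1)] e f
    using i0 assms(1) by (auto simp: pvf_def dest: okc_indep)
qed

definition cl :: "(nat \<times> nat) set \<Rightarrow> nat \<Rightarrow> col" where
  "cl S j = ((0,j) \<in> S, (1,j) \<in> S, (2,j) \<in> S, (3,j) \<in> S)"

lemma allS: "(\<forall>i<Suc n. P i) \<longleftrightarrow> P n \<and> (\<forall>i<n. P i)"
  by (auto simp: less_Suc_eq)

lemma exS: "(\<exists>i<Suc n. P i) \<longleftrightarrow> P n \<or> (\<exists>i<n. P i)"
  by (auto simp: less_Suc_eq)

lemma all4: "(\<forall>i<(4::nat). P i) \<longleftrightarrow> P 0 \<and> P 1 \<and> P 2 \<and> P 3"
  by (auto simp: less_Suc_eq numeral_eq_Suc)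

lemma all3: "(\<forall>i<(3::nat). P i) \<longleftrightarrow> P 0 \<and> P 1 \<and> P 2"
  by (auto simp: less_Suc_eq numeral_eq_Suc)

lemma nbcard: "card {u\<in>S. grid_E (i,j) u} =
   of_bool ((Suc i,j)\<in>S) + of_bool (0<i \<and> (i-1,j)\<in>S) + of_bool ((i,Suc j)\<in>S) + of_bool (0<j \<and> (i,j-1)\<in>S)"
proof (cases i; cases j)
  assume "i = 0" "j = 0"
  then have "{u\<in>S. grid_E (i,j) u} = S \<inter> {(Suc i,j),(i,Suc j)}"
    by (auto simp: grid_E_def)
  then show ?thesis using \<open>i=0\<close> \<open>j=0\<close> by (simp add: Int_insert_right card_insert_if)
next
  fix b assume "i = 0" "j = Suc b"
  then have "{u\<in>S. grid_E (i,j) u} = S \<inter> {(Suc i,j),(i,Suc j),(i,b)}"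
    by (auto simp: grid_E_def)
  then show ?thesis using \<open>i=0\<close> \<open>j=Suc b\<close> by (simp add: Int_insert_right card_insert_if)
next
  fix a assume "i = Suc a" "j = 0"
  then have "{u\<in>S. grid_E (i,j) u} = S \<inter> {(Suc i,j),(i,Suc j),(a,j)}"
    by (auto simp: grid_E_def)
  then show ?thesis using \<open>i=Suc a\<close> \<open>j=0\<close> by (simp add: Int_insert_right card_insert_if)
next
  fix a b assume "i = Suc a" "j = Suc b"
  then have "{u\<in>S. grid_E (i,j) u} = S \<inter> {(Suc i,j),(i,Suc j),(a,j),(i,b)}"
    by (auto simp: grid_E_def)
  then show ?thesis using \<open>i=Suc a\<close> \<open>j=Suc b\<close> by (simp add: Int_insert_right card_insert_if)
qed

lemma okc_cl: "okc (pvf (cl S) j) (cl S j) (cl S (Suc j)) \<longleftrightarrow>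
  (\<forall>i<3. \<not>((i,j)\<in>S \<and> (Suc i,j)\<in>S)) \<and> (\<forall>i<3. \<not>((i,Suc j)\<in>S \<and> (Suc i,Suc j)\<in>S)) \<and>
  (\<forall>i<4. \<not>(0<j \<and> (i,j-1)\<in>S \<and> (i,j)\<in>S)) \<and> (\<forall>i<4. \<not>((i,j)\<in>S \<and> (i,Suc j)\<in>S)) \<and>
  (\<forall>i<4. (i,j)\<notin>S \<longrightarrow> cnt12 (of_bool (i<3 \<and> (Suc i,j)\<in>S) + of_bool (0<i \<and> (i-1,j)\<in>S)
        + of_bool ((i,Suc j)\<in>S) + of_bool (0<j \<and> (i,j-1)\<in>S)))"
  by (cases j) (simp_all add: allS exS pvf_def cl_def cnt12_def One_nat_def numeral_eq_Suc)

lemma noedge_iff: "(\<forall>u\<in>S. \<forall>v\<in>S. \<not> grid_E u v) \<longleftrightarrow>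
   (\<forall>i j. (i,j)\<in>S \<longrightarrow> (Suc i,j)\<notin>S \<and> (i,Suc j)\<notin>S)"
  unfolding grid_E_def by fastforce

lemma setA:
  assumes V: "S \<subseteq> grid_V 4 n"
  shows "indep_12_set (grid_V 4 n) grid_E S \<longleftrightarrow> (\<forall>j<n. okc (pvf (cl S) j) (cl S j) (cl S (Suc j)))"
proof -
  have inS: "(i,j)\<in>S \<Longrightarrow> i<4 \<and> j<n" for i j using V by (auto simp: grid_V_def)
  define D :: "nat \<Rightarrow> nat \<Rightarrow> nat" where "D i j = of_bool (i<3 \<and> (Suc i,j)\<in>S) + of_bool (0<i \<and> (i-1,j)\<in>S) + of_bool ((i,Suc j)\<in>S) + of_bool (0<j \<and> (i,j-1)\<in>S)" for i j
  have nb: "card {u\<in>S. grid_E (i,j) u} = D i j" for i j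
    unfolding nbcard D_def using inS[of "Suc i" j] by auto
  have dom0: "(\<forall>v\<in>grid_V 4 n - S. 1 \<le> card {u\<in>S. grid_E v u} \<and> card {u\<in>S. grid_E v u} \<le> 2)
     \<longleftrightarrow> (\<forall>i<4. \<forall>j<n. (i,j)\<notin>S \<longrightarrow> 1 \<le> card {u\<in>S. grid_E (i,j) u} \<and> card {u\<in>S. grid_E (i,j) u} \<le> 2)"
    by (auto simp: grid_V_def)
  have dom: "(\<forall>v\<in>grid_V 4 n - S. 1 \<le> card {u\<in>S. grid_E v u} \<and> card {u\<in>S. grid_E v u} \<le> 2)
     \<longleftrightarrow> (\<forall>i<4. \<forall>j<n. (i,j)\<notin>S \<longrightarrow> cnt12 (D i j))"
    unfolding dom0 nb cnt12_def by (rule refl)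
  have L: "indep_12_set (grid_V 4 n) grid_E S \<longleftrightarrow>
      (\<forall>i j. (i,j)\<in>S \<longrightarrow> (Suc i,j)\<notin>S \<and> (i,Suc j)\<notin>S) \<and> (\<forall>i<4. \<forall>j<n. (i,j)\<notin>S \<longrightarrow> cnt12 (D i j))"
    unfolding indep_12_set_def noedge_iff dom using V by blast
  have R1: "(\<forall>j<n. okc (pvf (cl S) j) (cl S j) (cl S (Suc j))) \<longleftrightarrow>
    (\<forall>j<n. (\<forall>i<3. \<not>((i,j)\<in>S \<and> (Suc i,j)\<in>S))) \<and>
    (\<forall>j<n. (\<forall>i<3. \<not>((i,Suc j)\<in>S \<and> (Suc i,Suc j)\<in>S))) \<and>
    (\<forall>j<n. (\<forall>i<4. \<not>(0<j \<and> (i,j-1)\<in>S \<and> (i,j)\<in>S))) \<and>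
    (\<forall>j<n. (\<forall>i<4. \<not>((i,j)\<in>S \<and> (i,Suc j)\<in>S))) \<and>
    (\<forall>j<n. (\<forall>i<4. (i,j)\<notin>S \<longrightarrow> cnt12 (D i j)))"
    unfolding okc_cl D_def by blast
  have X: "(\<forall>i j. (i,j)\<in>S \<longrightarrow> (Suc i,j)\<notin>S \<and> (i,Suc j)\<notin>S) \<longleftrightarrow>
    (\<forall>j<n. (\<forall>i<3. \<not>((i,j)\<in>S \<and> (Suc i,j)\<in>S))) \<and>
    (\<forall>j<n. (\<forall>i<3. \<not>((i,Suc j)\<in>S \<and> (Suc i,Suc j)\<in>S))) \<and>
    (\<forall>j<n. (\<forall>i<4. \<not>(0<j \<and> (i,j-1)\<in>S \<and> (i,j)\<in>S))) \<and>
    (\<forall>j<n. (\<forall>i<4. \<not>((i,j)\<in>S \<and> (i,Suc j)\<in>S)))"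
  proof (rule iffI)
    assume A: "\<forall>i j. (i,j)\<in>S \<longrightarrow> (Suc i,j)\<notin>S \<and> (i,Suc j)\<notin>S"
    have 3: "\<forall>j<n. (\<forall>i<4. \<not>(0<j \<and> (i,j-1)\<in>S \<and> (i,j)\<in>S))"
    proof (intro allI impI notI)
      fix j i assume "0<j \<and> (i,j-1)\<in>S \<and> (i,j)\<in>S"
      then show False using A[rule_format, of i "j-1"] by simp
    qed
    show "(\<forall>j<n. (\<forall>i<3. \<not>((i,j)\<in>S \<and> (Suc i,j)\<in>S))) \<and>
    (\<forall>j<n. (\<forall>i<3. \<not>((i,Suc j)\<in>S \<and> (Suc i,Suc j)\<in>S))) \<and>
    (\<forall>j<n. (\<forall>i<4. \<not>(0<j \<and> (i,j-1)\<in>S \<and> (i,j)\<in>S))) \<and>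
    (\<forall>j<n. (\<forall>i<4. \<not>((i,j)\<in>S \<and> (i,Suc j)\<in>S)))"
      using A 3 by blast
  next
    assume R: "(\<forall>j<n. (\<forall>i<3. \<not>((i,j)\<in>S \<and> (Suc i,j)\<in>S))) \<and>
    (\<forall>j<n. (\<forall>i<3. \<not>((i,Suc j)\<in>S \<and> (Suc i,Suc j)\<in>S))) \<and>
    (\<forall>j<n. (\<forall>i<4. \<not>(0<j \<and> (i,j-1)\<in>S \<and> (i,j)\<in>S))) \<and>
    (\<forall>j<n. (\<forall>i<4. \<not>((i,j)\<in>S \<and> (i,Suc j)\<in>S)))"
    show "\<forall>i j. (i,j)\<in>S \<longrightarrow> (Suc i,j)\<notin>S \<and> (i,Suc j)\<notin>S"
    proof (intro allI impI conjI notI)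
      fix i j assume ij: "(i,j)\<in>S"
      then have "i<4" "j<n" using inS by auto
      {
        assume s: "(Suc i,j)\<in>S"
        then have "i<3" using inS[of "Suc i" j] by simp
        then show False using R ij \<open>j<n\<close> s by blast
      }
      {
        assume "(i,Suc j)\<in>S"
        then show False using R ij \<open>j<n\<close> \<open>i<4\<close> by blast
      }
    qed
  qed
  show ?thesis unfolding L R1 X by blast
qed

lemma card_cols:
  assumes V: "S \<subseteq> grid_V 4 n"
  shows "card S = (\<Sum>j<n. cost (cl S j))"
proof -
  have fin: "finite (grid_V 4 n)" by (simp add: grid_V_def)
  have "card S = card (grid_V 4 n \<inter> {x. x \<in> S})" using V by (metis Collect_mem_eq inf.absorb_iff2)
  also have "\<dots> = (\<Sum>x\<in>grid_V 4 n. of_bool (x \<in> S))" using fin by simp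
  also have "\<dots> = (\<Sum>i\<in>{0..<4}. \<Sum>j\<in>{0..<n}. of_bool ((i,j) \<in> S))"
    unfolding grid_V_def sum.cartesian_product by (rule sum.cong) auto
  also have "\<dots> = (\<Sum>j\<in>{0..<n}. \<Sum>i\<in>{0..<4}. of_bool ((i,j) \<in> S))"
    by (rule sum.swap)
  also have "\<dots> = (\<Sum>j<n. cost (cl S j))"
  proof -
    have s4: "{0..<4::nat} = {0,1,2,3}" by auto
    have "(\<Sum>i\<in>{0..<4::nat}. of_bool ((i,j) \<in> S)::nat) = cost (cl S j)" for j
      by (simp add: s4 cl_def del: sum_of_bool_eq)
    then show ?thesis by (simp add: atLeast0LessThan del: sum_of_bool_eq)
  qed
  finally show ?thesis .
qed

fun comp :: "nat \<Rightarrow> col \<Rightarrow> bool" where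
  "comp i (b0,b1,b2,b3) = (if i=0 then b0 else if i=1 then b1 else if i=2 then b2 else b3)"

definition setw :: "col list \<Rightarrow> (nat \<times> nat) set" where
  "setw w = {(i,j). j < length w \<and> i < 4 \<and> comp i (w!j)}"

lemma cl_setw: "cl (setw w) j = (if j < length w then w!j else K0)"
  by (cases "w!j") (auto simp: cl_def setw_def)

lemma setw_sub: "setw w \<subseteq> grid_V 4 (length w)"
  by (auto simp: setw_def grid_V_def)

lemma setw_ok:
  assumes "acc w"
  shows "indep_12_set (grid_V 4 (length w)) grid_E (setw w) \<and> card (setw w) = sum_list (map cost w)"
proof -
  let ?n = "length w"
  have n: "?n \<ge> 1" using assms by (cases w) auto
  have m: "map (cl (setw w)) [0..<?n] = w"
    by (rule nth_equalityI) (auto simp: cl_setw)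
  have z: "cl (setw w) ?n = K0" by (simp add: cl_setw)
  have "\<forall>j<?n. okc (pvf (cl (setw w)) j) (cl (setw w) j) (cl (setw w) (Suc j))"
    using acc_map[OF n, of "cl (setw w)", OF z] m assms by simp
  then have i: "indep_12_set (grid_V 4 ?n) grid_E (setw w)" using setA[OF setw_sub] by blast
  have "card (setw w) = (\<Sum>j<?n. cost (cl (setw w) j))" by (rule card_cols[OF setw_sub])
  also have "\<dots> = (\<Sum>j<?n. cost (w!j))" by (simp add: cl_setw)
  also have "\<dots> = sum_list (map cost w)" by (simp add: sum_list_sum_nth atLeast0LessThan)
  finally show ?thesis using i by simp
qed

lemma set_word:
  assumes "indep_12_set (grid_V 4 n) grid_E S" "n \<ge> 1"
  shows "acc (map (cl S) [0..<n]) \<and> card S = sum_list (map cost (map (cl S) [0..<n]))"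
proof -
  have V: "S \<subseteq> grid_V 4 n" using assms(1) by (simp add: indep_12_set_def)
  have z: "cl S n = K0" using V by (auto simp: cl_def grid_V_def)
  have a: "acc (map (cl S) [0..<n])"
    using acc_map[OF assms(2), of "cl S", OF z] setA[OF V] assms(1) by simp
  have "card S = (\<Sum>j<n. cost (cl S j))" by (rule card_cols[OF V])
  also have "\<dots> = sum_list (map cost (map (cl S) [0..<n]))"
    by (simp add: sum_list_sum_nth atLeast0LessThan)
  finally show ?thesis using a by simp
qed

lemma len_rep: "length (concat (replicate k xs)) = k * length xs"
  by (induction k) auto

lemma set_rep: "set (concat (replicate k xs)) \<subseteq> set xs"
  by (induction k) auto

lemma cost1: "\<forall>c\<in>set w. cost c = 1 \<Longrightarrow> sum_list (map cost w) = length w"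
  by (induction w) auto

lemma wA: "acc (concat (replicate (Suc q) [K2,K8,K1,K4]))"
proof -
  have "steps (K1,K4) [K2,K8,K1,K4] = Some (K1,K4)" by (simp add: cnt12_def)
  then have r: "steps (K1,K4) (concat (replicate q [K2,K8,K1,K4])) = Some (K1,K4)" by (rule steps_rep)
  show ?thesis using r by (simp add: steps_append cnt12_def)
qed

lemma wB:
  assumes "t \<in> {[K1,K8,K2], [K1,K8,K2,K8,K1,K4,K1,K8,K2], [K1,K8,K2,K8,K1,K4]}"
  shows "acc ([K2,K8,K1,K4] @ concat (replicate q [K1,K8,K2,K4]) @ t)"
proof -
  have a: "steps (K1,K4) [K1,K8,K2,K4] = Some (K2,K4)" by (simp add: cnt12_def)
  have b: "steps (K2,K4) [K1,K8,K2,K4] = Some (K2,K4)" by (simp add: cnt12_def)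
  note r = steps_rep2[OF a b, of q]
  show ?thesis using assms r by (auto simp: steps_append cnt12_def)
qed

lemma regular_word:
  assumes "n \<ge> 4" "n \<notin> {5,6,9}"
  shows "\<exists>w. length w = n \<and> acc w \<and> sum_list (map cost w) = n"
proof -
  define q where "q = n div 4"
  have nq: "n = 4*q + n mod 4" unfolding q_def by simp
  have "n mod 4 < 4" by simp
  then consider "n mod 4 = 0" | "n mod 4 = 1" | "n mod 4 = 2" | "n mod 4 = 3" by linarith
  then show ?thesis
  proof cases
    case 1
    then have "q \<ge> 1" using assms nq by simp
    then obtain q' where q': "q = Suc q'" by (cases q) auto
    let ?w = "concat (replicate (Suc q') [K2,K8,K1,K4])"
    have "length ?w = n" using nq 1 q' by (simp only: len_rep) simp
    moreover have "\<forall>c\<in>set ?w. cost c = 1" using set_rep[of "Suc q'" "[K2,K8,K1,K4]"] by auto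
    ultimately show ?thesis using wA cost1 by metis
  next
    case 2
    then have "q \<ge> 3" using assms nq by auto
    let ?w = "[K2,K8,K1,K4] @ concat (replicate (q-3) [K1,K8,K2,K4]) @ [K1,K8,K2,K8,K1,K4,K1,K8,K2]"
    have "length ?w = n" using nq 2 \<open>q\<ge>3\<close> by (simp add: len_rep)
    moreover have "\<forall>c\<in>set ?w. cost c = 1" using set_rep[of "q-3" "[K1,K8,K2,K4]"] by auto
    moreover have "acc ?w" by (rule wB) simp
    ultimately show ?thesis using cost1 by metis
  next
    case 3
    then have "q \<ge> 2" using assms nq by auto
    let ?w = "[K2,K8,K1,K4] @ concat (replicate (q-2) [K1,K8,K2,K4]) @ [K1,K8,K2,K8,K1,K4]"
    have "length ?w = n" using nq 3 \<open>q\<ge>2\<close> by (simp add: len_rep)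
    moreover have "\<forall>c\<in>set ?w. cost c = 1" using set_rep[of "q-2" "[K1,K8,K2,K4]"] by auto
    moreover have "acc ?w" by (rule wB) simp
    ultimately show ?thesis using cost1 by metis
  next
    case 4
    then have "q \<ge> 1" using assms nq by auto
    let ?w = "[K2,K8,K1,K4] @ concat (replicate (q-1) [K1,K8,K2,K4]) @ [K1,K8,K2]"
    have "length ?w = n" using nq 4 \<open>q\<ge>1\<close> by (simp add: len_rep)
    moreover have "\<forall>c\<in>set ?w. cost c = 1" using set_rep[of "q-1" "[K1,K8,K2,K4]"] by auto
    moreover have "acc ?w" by (rule wB) simp
    ultimately show ?thesis using cost1 by metis
  qed
qed

theorem mainTheorem5:
  fixes n :: nat
  assumes "n \<ge> 4"
  shows "(\<exists>S. indep_12_set (grid_V 4 n) grid_E S) \<and>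
         i12 (grid_V 4 n) grid_E = (if n \<in> {5, 6, 9} then n + 1 else n)"
proof -
  define m where "m = (if n \<in> {5, 6, 9} then n + 1 else n)"
  have "\<exists>w. length w = n \<and> acc w \<and> sum_list (map cost w) = m"
  proof (cases "n \<in> {5,6,9}")
    case True
    then consider "n = 5" | "n = 6" | "n = 9" by auto
    then show ?thesis
    proof cases
      case 1
      show ?thesis using 1 unfolding m_def
        by (intro exI[of _ "[K2,K8,K1,K4,K9]"]) (simp add: cnt12_def)
    next
      case 2
      show ?thesis using 2 unfolding m_def
        by (intro exI[of _ "[K2,K8,K1,K4,K1,K10]"]) (simp add: cnt12_def)
    next
      case 3
      show ?thesis using 3 unfolding m_def
        by (intro exI[of _ "[K2,K8,K1,K4,K1,K8,K2,K4,K9]"]) (simp add: cnt12_def)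
    qed
  next
    case False
    then show ?thesis using regular_word[OF assms] unfolding m_def by simp
  qed
  then obtain w where w: "length w = n" "acc w" "sum_list (map cost w) = m" by blast
  from setw_ok[OF w(2)] w have S0: "indep_12_set (grid_V 4 n) grid_E (setw w)" "card (setw w) = m" by auto
  have low: "card S \<ge> m" if S: "indep_12_set (grid_V 4 n) grid_E S" for S
  proof -
    from set_word[OF S] assms obtain a where
      a: "acc (map (cl S) [0..<n])" "card S = sum_list (map cost (map (cl S) [0..<n]))" by auto
    have ln: "length (map (cl S) [0..<n]) = n" by simp
    show ?thesis
    proof (cases "n \<in> {5,6,9}")
      case True
      then consider "n = 5" | "n = 6" | "n = 9" by auto
      then show ?thesis
        using low5[OF a(1)] low6[OF a(1)] low9[OF a(1)] ln a(2) unfolding m_def by (cases; simp)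
    next
      case False
      then show ?thesis using low_all[OF a(1)] ln a(2) unfolding m_def by simp
    qed
  qed
  have fin: "finite {S. indep_12_set (grid_V 4 n) grid_E S}"
  proof (rule finite_subset)
    show "{S. indep_12_set (grid_V 4 n) grid_E S} \<subseteq> Pow (grid_V 4 n)"
      by (auto simp: indep_12_set_def)
    show "finite (Pow (grid_V 4 n))" by (simp add: grid_V_def)
  qed
  have "i12 (grid_V 4 n) grid_E = m"
    unfolding i12_def
  proof (rule Min_eqI)
    show "finite (card ` {S. indep_12_set (grid_V 4 n) grid_E S})" using fin by simp
    show "\<And>y. y \<in> card ` {S. indep_12_set (grid_V 4 n) grid_E S} \<Longrightarrow> m \<le> y" using low by auto
    show "m \<in> card ` {S. indep_12_set (grid_V 4 n) grid_E S}" using S0 by force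
  qed
  then show ?thesis using S0 unfolding m_def by blast
qed

end
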